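(* Let $\xi^{(1)},\dots,\xi^{(N)}\in\mathbb{R}^D$, $\epsilon\in(0,1)$, and let $\alpha$, $\mathrm{SV}$, $\mathrm{BSV}\neq\emptyset$, $W$, $\gamma$ and the polyhedron $$\mathcal{U}=\Big\{\xi\in\mathbb{R}^D\ \Big|\ \exists\,\upsilon_n\in\mathbb{R}^D\ (n\in\mathrm{SV})\ \text{s.t.}\ \sum_{n\in\mathrm{SV}}\alpha_n\upsilon_n^\intercal\mathbf{1}\le\gamma,\ \ -\upsilon_n\le W(\xi-\xi^{(n)})\le\upsilon_n\ \ \forall n\in\mathrm{SV}\Big\}$$ be as described in the context. Let $y\in\mathbb{R}^p$, $H\in\mathbb{R}^{p\times D}$ and $\beta\in\mathbb{R}$. Then the robust constraint $$\max_{\xi\in\mathcal{U}}\ (H\xi)^\intercal y\le\beta$$ holds if and only if there exist $\pi\ge0$ and $\mu_n,\rho_n\in\mathbb{R}^D_{\ge0}$ for $n\in\mathrm{SV}$ such that $$\sum_{n\in\mathrm{SV}}(\mu_n-\rho_n)^\intercal W\xi^{(n)}+\pi\gamma\le\beta,\qquad \sum_{n\in\mathrm{SV}}W(\rho_n-\mu_n)+H^\intercal y=0,\qquad \rho_n+\mu_n=\pi\alpha_n\mathbf 1\ \ \forall n\in\mathrm{SV}.$$ (These are linear constraints in $(y,\beta,\pi,\mu,\rho)$ when $\beta$ is affine in $y$.)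
   Context: Let $\Sigma$ be the (positive definite) covariance matrix of the samples and $W=\Sigma^{-1/2}$ (symmetric). For $d=1,\dots,D$ let $l_d=\xi_{d,\max}-\xi_{d,\min}$ (upper minus lower bound of the uncertainty in coordinate $d$). Kernel: $K(\xi^{1},\xi^{2})=\sum_{d=1}^D l_d-\Vert W(\xi^{1}-\xi^{2})\Vert_1$, with feature map $\phi$ into a Hilbert space satisfying $\phi(a)^\intercal\phi(b)=K(a,b)$. One-class support vector clustering solves $$\min_{R,o,\omega}\ R^2+\frac{1}{N\epsilon}\sum_{n=1}^N\omega_n\quad\text{s.t.}\quad \Vert\phi(\xi^{(n)})-o\Vert^2\le R^2+\omega_n,\ \ \omega_n\ge0,\ \ n=1,\dots,N.$$ Let $(R,o,\omega)$ be optimal with multipliers $\alpha,\beta'\in\mathbb{R}^N_{\ge0}$ satisfying the KKT conditions $\mathbf 1^\intercal\alpha=1$, $o=\sum_n\alpha_n\phi(\xi^{(n)})$, $\alpha+\beta'=\frac{1}{N\epsilon}\mathbf 1$, $\omega_n\beta'_n=0$, $\alpha_n(R^2+\omega_n-\Vert\phi(\xi^{(n)})-o\Vert^2)=0$. Let $\mathrm{SV}=\{n:\alpha_n>0\}$, $\mathrm{BSV}=\{n:0<\alpha_n<1/(N\epsilon)\}$, and for any $k\in\mathrm{BSV}$ let $\gamma=\sum_{n\in\mathrm{SV}}\alpha_n\Vert W(\xi^{(k)}-\xi^{(n)})\Vert_1$. Vector inequalities are componentwise and $\mathbf 1$ is the all-ones vector. *)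

theory Defs
  imports "HOL-Analysis.Analysis"
begin

definition l1norm :: "real^'d \<Rightarrow> real" where
  "l1norm x = (\<Sum>i\<in>UNIV. \<bar>x $ i\<bar>)"

definition kernelK :: "real^'d \<Rightarrow> real^'d \<Rightarrow> real^'d^'d \<Rightarrow> real^'d \<Rightarrow> real^'d \<Rightarrow> real" where
  "kernelK ximin ximax W a b = (\<Sum>d\<in>UNIV. ximax $ d - ximin $ d) - l1norm (W *v (a - b))"

definition svc_feasible ::
  "nat \<Rightarrow> (nat \<Rightarrow> real^'d) \<Rightarrow> (real^'d \<Rightarrow> 'h::real_inner) \<Rightarrow> real \<Rightarrow> 'h \<Rightarrow> (nat \<Rightarrow> real) \<Rightarrow> bool" where
  "svc_feasible N xi phi R c omega \<longleftrightarrow>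
     (\<forall>n\<in>{1..N}. (norm (phi (xi n) - c))^2 \<le> R^2 + omega n \<and> omega n \<ge> 0)"

definition svc_objective :: "nat \<Rightarrow> real \<Rightarrow> real \<Rightarrow> (nat \<Rightarrow> real) \<Rightarrow> real" where
  "svc_objective N eps R omega = R^2 + (1 / (real N * eps)) * (\<Sum>n=1..N. omega n)"

definition svc_optimal ::
  "nat \<Rightarrow> real \<Rightarrow> (nat \<Rightarrow> real^'d) \<Rightarrow> (real^'d \<Rightarrow> 'h::real_inner) \<Rightarrow> real \<Rightarrow> 'h \<Rightarrow> (nat \<Rightarrow> real) \<Rightarrow> bool" where
  "svc_optimal N eps xi phi R c omega \<longleftrightarrow>
     svc_feasible N xi phi R c omega \<and>
     (\<forall>R' c' omega'. svc_feasible N xi phi R' c' omega' \<longrightarrow>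
         svc_objective N eps R omega \<le> svc_objective N eps R' omega')"

definition U_set :: "(nat \<Rightarrow> real^'d) \<Rightarrow> (nat \<Rightarrow> real) \<Rightarrow> nat set \<Rightarrow> real^'d^'d \<Rightarrow> real \<Rightarrow> (real^'d) set" where
  "U_set xi alpha SV W gamma =
     {x. \<exists>upsilon :: nat \<Rightarrow> real^'d.
          (\<Sum>n\<in>SV. alpha n * (\<Sum>i\<in>UNIV. upsilon n $ i)) \<le> gamma \<and>
          (\<forall>n\<in>SV. \<forall>i. - (upsilon n $ i) \<le> (W *v (x - xi n)) $ i \<and>
                        (W *v (x - xi n)) $ i \<le> upsilon n $ i)}"

end

theory Submission
  imports Defs
begin


lemma inner_mv: "inner (x::real^'n) (A *v y) = inner (transpose A *v x) (y::real^'m)"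
  by (simp add: dot_lmul_matrix)

lemma signs_finite: "finite {v::real^'d. \<forall>i. v$i = 1 \<or> v$i = -1}"
proof -
  have "{v::real^'d. \<forall>i. v$i = 1 \<or> v$i = -1} \<subseteq> (\<lambda>f. \<chi> i. if f i then 1 else -1) ` (UNIV :: ('d \<Rightarrow> bool) set)"
  proof
    fix v :: "real^'d" assume "v \<in> {v. \<forall>i. v$i = 1 \<or> v$i = -1}"
    then have "v = (\<chi> i. if v$i = 1 then 1 else -1)" by (auto simp: vec_eq_iff)
    then show "v \<in> range (\<lambda>f. \<chi> i. if f i then 1 else -1)"
      by (intro image_eqI[where x="\<lambda>i. v$i = 1"]) auto
  qed
  then show ?thesis by (rule finite_subset) simp
qed

lemma sign_l1: "inner (\<chi> i. if (z::real^'d) $ i \<ge> 0 then 1 else -1) z = l1norm z"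
  unfolding l1norm_def inner_vec_def by (rule sum.cong) auto

lemma mv_neg: "(A::real^'m^'n) *v (- x) = - (A *v x)"
  by (simp add: vec_eq_iff matrix_vector_mult_def sum_negf)

lemma l1norm_nonneg: "l1norm z \<ge> 0"
  unfolding l1norm_def by (simp add: sum_nonneg)

lemma l1norm_zero: "l1norm (z::real^'d) = 0 \<Longrightarrow> z = 0"
  unfolding l1norm_def
  by (subst (asm) sum_nonneg_eq_0_iff) (auto simp: vec_eq_iff)

lemma sign_in: "(\<chi> i. if (z::real^'d) $ i \<ge> 0 then 1 else -1) \<in> {v::real^'d. \<forall>i. v$i = 1 \<or> v$i = -1}"
  by auto

theorem proposition3:
  fixes N :: nat and eps :: real
    and xi :: "nat \<Rightarrow> real^'d"
    and Sigma W :: "real^'d^'d"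
    and ximin ximax :: "real^'d"
    and phi :: "real^'d \<Rightarrow> 'h::real_inner"
    and R :: real and c :: 'h and omega :: "nat \<Rightarrow> real"
    and alpha beta' :: "nat \<Rightarrow> real"
    and SV BSV :: "nat set" and k :: nat and gamma :: real
    and y :: "real^'p" and H :: "real^'d^'p" and \<beta> :: real
  assumes N_pos: "N \<ge> 1"
    and eps: "0 < eps" "eps < 1"
    and Sigma_sym: "transpose Sigma = Sigma"
    and Sigma_pd: "\<And>v. v \<noteq> 0 \<Longrightarrow> v \<bullet> (Sigma *v v) > 0"
    and W_sym: "transpose W = W"
    and W_pd: "\<And>v. v \<noteq> 0 \<Longrightarrow> v \<bullet> (W *v v) > 0"
    and W_sqrt: "W ** W ** Sigma = mat 1"
    and bounds: "\<And>d. ximin $ d \<le> ximax $ d"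
    and samples_box: "\<And>n d. n \<in> {1..N} \<Longrightarrow> ximin $ d \<le> xi n $ d \<and> xi n $ d \<le> ximax $ d"
    and feature: "\<And>m n. m \<in> {1..N} \<Longrightarrow> n \<in> {1..N} \<Longrightarrow>
                    inner (phi (xi m)) (phi (xi n)) = kernelK ximin ximax W (xi m) (xi n)"
    and opt: "svc_optimal N eps xi phi R c omega"
    and alpha_nonneg: "\<And>n. n \<in> {1..N} \<Longrightarrow> alpha n \<ge> 0"
    and beta'_nonneg: "\<And>n. n \<in> {1..N} \<Longrightarrow> beta' n \<ge> 0"
    and kkt1: "(\<Sum>n=1..N. alpha n) = 1"
    and kkt2: "c = (\<Sum>n=1..N. alpha n *\<^sub>R phi (xi n))"
    and kkt3: "\<And>n. n \<in> {1..N} \<Longrightarrow> alpha n + beta' n = 1 / (real N * eps)"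
    and kkt4: "\<And>n. n \<in> {1..N} \<Longrightarrow> omega n * beta' n = 0"
    and kkt5: "\<And>n. n \<in> {1..N} \<Longrightarrow>
                 alpha n * (R^2 + omega n - (norm (phi (xi n) - c))^2) = 0"
    and SV_def: "SV = {n \<in> {1..N}. alpha n > 0}"
    and BSV_def: "BSV = {n \<in> {1..N}. 0 < alpha n \<and> alpha n < 1 / (real N * eps)}"
    and k_BSV: "k \<in> BSV"
    and gamma_def: "gamma = (\<Sum>n\<in>SV. alpha n * l1norm (W *v (xi k - xi n)))"
  shows "(\<forall>x\<in>U_set xi alpha SV W gamma. (H *v x) \<bullet> y \<le> \<beta>) \<longleftrightarrow>
         (\<exists>\<pi>::real. \<exists>\<mu> \<rho> :: nat \<Rightarrow> real^'d.
            \<pi> \<ge> 0 \<and>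
            (\<forall>n\<in>SV. \<forall>i. \<mu> n $ i \<ge> 0 \<and> \<rho> n $ i \<ge> 0) \<and>
            (\<Sum>n\<in>SV. (\<mu> n - \<rho> n) \<bullet> (W *v xi n)) + \<pi> * gamma \<le> \<beta> \<and>
            (\<Sum>n\<in>SV. W *v (\<rho> n - \<mu> n)) + transpose H *v y = 0 \<and>
            (\<forall>n\<in>SV. \<rho> n + \<mu> n = (\<chi> i. \<pi> * alpha n)))"
proof -
  have finSV: "finite SV" using SV_def by simp
  have aSV: "\<And>n. n \<in> SV \<Longrightarrow> alpha n > 0" using SV_def by simp
  have kSV: "k \<in> SV" using k_BSV BSV_def SV_def by simp
  define cv where "cv = transpose H *v y"
  have Hx: "(H *v x) \<bullet> y = x \<bullet> cv" for x
  proof -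
    have "(H *v x) \<bullet> y = y \<bullet> (H *v x)" by (rule inner_commute)
    also have "\<dots> = (transpose H *v y) \<bullet> x" by (rule inner_mv)
    also have "\<dots> = x \<bullet> cv" unfolding cv_def by (rule inner_commute)
    finally show ?thesis .
  qed
  have Wsw: "a \<bullet> (W *v b) = (W *v a) \<bullet> b" for a b
    using inner_mv[of a W b] unfolding W_sym .
  have sumW: "\<And>v lam. v \<bullet> (\<Sum>n\<in>SV. W *v lam n) = (\<Sum>n\<in>SV. (W *v v) \<bullet> lam n)"
    by (simp add: inner_sum_right Wsw)
  show ?thesis
  proof
    assume rob: "\<forall>x\<in>U_set xi alpha SV W gamma. (H *v x) \<bullet> y \<le> \<beta>"
    define signs where "signs = {v::real^'d. \<forall>i. v$i = 1 \<or> v$i = -1}"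
    define S where "S = PiE SV (\<lambda>_. signs)"
    define gen where "gen \<sigma> = ((\<Sum>n\<in>SV. W *v (alpha n *\<^sub>R \<sigma> n)),
        (\<Sum>n\<in>SV. (alpha n *\<^sub>R \<sigma> n) \<bullet> (W *v xi n)) + gamma)" for \<sigma> :: "nat \<Rightarrow> real^'d"
    define G where "G = insert (0, 1) (gen ` S)"
    define D where "D = {p. \<exists>\<pi> lam s. \<pi> \<ge> 0 \<and> s \<ge> 0 \<and>
        (\<forall>n\<in>SV. \<forall>i. \<bar>lam n $ i\<bar> \<le> \<pi> * alpha n) \<and>
        p = ((\<Sum>n\<in>SV. W *v lam n), (\<Sum>n\<in>SV. lam n \<bullet> (W *v xi n)) + \<pi> * gamma + s)}"
    define K where "K = convex_cone hull G"
    have finG: "finite G" unfolding G_def S_def signs_def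
      using finSV signs_finite by (intro finite.insertI finite_imageI finite_PiE) auto
    have Kcl: "closed K" unfolding K_def by (rule closed_convex_cone_hull[OF finG])
    have Kcc: "convex_cone K" unfolding K_def
      by (rule convex_cone_convex_cone_hull)
    have Kcv: "convex K" unfolding K_def by (rule convex_convex_cone_hull)
    have GK: "G \<subseteq> K" unfolding K_def by (rule hull_subset)
    have Dcc: "convex_cone D"
      unfolding convex_cone_iff
    proof (intro conjI ballI allI impI)
      show "0 \<in> D" unfolding D_def
        by (rule CollectI, rule exI[where x=0], rule exI[where x="\<lambda>_. 0"], rule exI[where x=0])
           (simp add: zero_prod_def)
    next
      fix p q assume "p \<in> D" "q \<in> D"
      then obtain \<pi>1 lam1 s1 \<pi>2 lam2 s2 where
        A: "\<pi>1 \<ge> 0" "s1 \<ge> 0" "\<forall>n\<in>SV. \<forall>i. \<bar>lam1 n $ i\<bar> \<le> \<pi>1 * alpha n"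
          "p = ((\<Sum>n\<in>SV. W *v lam1 n), (\<Sum>n\<in>SV. lam1 n \<bullet> (W *v xi n)) + \<pi>1 * gamma + s1)"
        and B: "\<pi>2 \<ge> 0" "s2 \<ge> 0" "\<forall>n\<in>SV. \<forall>i. \<bar>lam2 n $ i\<bar> \<le> \<pi>2 * alpha n"
          "q = ((\<Sum>n\<in>SV. W *v lam2 n), (\<Sum>n\<in>SV. lam2 n \<bullet> (W *v xi n)) + \<pi>2 * gamma + s2)"
        unfolding D_def by blast
      have "\<forall>n\<in>SV. \<forall>i. \<bar>(lam1 n + lam2 n) $ i\<bar> \<le> (\<pi>1 + \<pi>2) * alpha n"
      proof (intro ballI allI)
        fix n i assume "n \<in> SV"
        then have "\<bar>lam1 n $ i\<bar> \<le> \<pi>1 * alpha n" "\<bar>lam2 n $ i\<bar> \<le> \<pi>2 * alpha n" using A B by auto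
        then show "\<bar>(lam1 n + lam2 n) $ i\<bar> \<le> (\<pi>1 + \<pi>2) * alpha n" by (simp add: distrib_right)
      qed
      moreover have "p + q = ((\<Sum>n\<in>SV. W *v (lam1 n + lam2 n)),
           (\<Sum>n\<in>SV. (lam1 n + lam2 n) \<bullet> (W *v xi n)) + (\<pi>1 + \<pi>2) * gamma + (s1 + s2))"
        using A(4) B(4) by (simp add: matrix_vector_right_distrib sum.distrib inner_add_left algebra_simps)
      ultimately show "p + q \<in> D" using A(1,2) B(1,2) unfolding D_def
        apply -
        apply (rule CollectI, rule exI[where x="\<pi>1 + \<pi>2"], rule exI[where x="\<lambda>n. lam1 n + lam2 n"], rule exI[where x="s1+s2"], intro conjI)
        by simp_all
    next
      fix p and r :: real assume "p \<in> D" "0 \<le> r"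
      then obtain \<pi>1 lam1 s1 where
        A: "\<pi>1 \<ge> 0" "s1 \<ge> 0" "\<forall>n\<in>SV. \<forall>i. \<bar>lam1 n $ i\<bar> \<le> \<pi>1 * alpha n"
          "p = ((\<Sum>n\<in>SV. W *v lam1 n), (\<Sum>n\<in>SV. lam1 n \<bullet> (W *v xi n)) + \<pi>1 * gamma + s1)"
        unfolding D_def by blast
      have "\<forall>n\<in>SV. \<forall>i. \<bar>(r *\<^sub>R lam1 n) $ i\<bar> \<le> (r * \<pi>1) * alpha n"
      proof (intro ballI allI)
        fix n i assume "n \<in> SV"
        then have "\<bar>lam1 n $ i\<bar> \<le> \<pi>1 * alpha n" using A by auto
        then have "r * \<bar>lam1 n $ i\<bar> \<le> r * (\<pi>1 * alpha n)" using \<open>0 \<le> r\<close> by (rule mult_left_mono)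
        then show "\<bar>(r *\<^sub>R lam1 n) $ i\<bar> \<le> (r * \<pi>1) * alpha n"
          using \<open>0 \<le> r\<close> by (simp add: abs_mult mult.assoc)
      qed
      moreover have "r *\<^sub>R p = ((\<Sum>n\<in>SV. W *v (r *\<^sub>R lam1 n)),
           (\<Sum>n\<in>SV. (r *\<^sub>R lam1 n) \<bullet> (W *v xi n)) + (r * \<pi>1) * gamma + (r * s1))"
        using A(4) by (simp add: matrix_vector_mult_scaleR scaleR_sum_right sum_distrib_left algebra_simps)
      moreover have "0 \<le> r * \<pi>1" "0 \<le> r * s1" using A(1,2) \<open>0 \<le> r\<close> by simp_all
      ultimately have X: "0 \<le> r * \<pi>1 \<and> 0 \<le> r * s1 \<and>
          (\<forall>n\<in>SV. \<forall>i. \<bar>(r *\<^sub>R lam1 n) $ i\<bar> \<le> (r * \<pi>1) * alpha n) \<and>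
          r *\<^sub>R p = ((\<Sum>n\<in>SV. W *v (r *\<^sub>R lam1 n)),
           (\<Sum>n\<in>SV. (r *\<^sub>R lam1 n) \<bullet> (W *v xi n)) + (r * \<pi>1) * gamma + (r * s1))"
        by blast
      show "r *\<^sub>R p \<in> D" unfolding D_def mem_Collect_eq
        by (rule exI, rule exI, rule exI, rule X)
    qed
    have GD: "G \<subseteq> D"
    proof
      fix g assume "g \<in> G"
      then consider "g = (0, 1)" | \<sigma> where "\<sigma> \<in> S" "g = gen \<sigma>" unfolding G_def by blast
      then show "g \<in> D"
      proof cases
        case 1
        have X: "0 \<le> (0::real) \<and> 0 \<le> (1::real) \<and> (\<forall>n\<in>SV. \<forall>i. \<bar>(0::real^'d) $ i\<bar> \<le> 0 * alpha n) \<and>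
            g = ((\<Sum>n\<in>SV. W *v (0::real^'d)), (\<Sum>n\<in>SV. (0::real^'d) \<bullet> (W *v xi n)) + 0 * gamma + 1)"
          using 1 by (simp add: zero_prod_def)
        show ?thesis unfolding D_def mem_Collect_eq
          by (rule exI, rule exI[where x="\<lambda>_. 0"], rule exI, rule X)
      next
        case 2
        have "\<forall>n\<in>SV. \<forall>i. \<bar>(alpha n *\<^sub>R \<sigma> n) $ i\<bar> \<le> 1 * alpha n"
        proof (intro ballI allI)
          fix n i assume n: "n \<in> SV"
          then have "\<sigma> n \<in> signs" using 2(1) S_def by (auto simp: PiE_iff)
          then have "\<sigma> n $ i = 1 \<or> \<sigma> n $ i = -1" unfolding signs_def by blast
          then have "\<bar>\<sigma> n $ i\<bar> = 1" by auto
          then show "\<bar>(alpha n *\<^sub>R \<sigma> n) $ i\<bar> \<le> 1 * alpha n" using aSV[OF n] by (simp add: abs_mult)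
        qed
        then have X: "0 \<le> (1::real) \<and> 0 \<le> (0::real) \<and> (\<forall>n\<in>SV. \<forall>i. \<bar>(alpha n *\<^sub>R \<sigma> n) $ i\<bar> \<le> 1 * alpha n) \<and>
            g = ((\<Sum>n\<in>SV. W *v (alpha n *\<^sub>R \<sigma> n)), (\<Sum>n\<in>SV. (alpha n *\<^sub>R \<sigma> n) \<bullet> (W *v xi n)) + 1 * gamma + 0)"
          unfolding 2(2) gen_def by simp
        show ?thesis unfolding D_def mem_Collect_eq
          by (rule exI, rule exI, rule exI, rule X)
      qed
    qed
    have KD: "K \<subseteq> D" unfolding K_def by (rule hull_minimal[where S=convex_cone, OF GD Dcc])
    have pK: "(cv, \<beta>) \<in> K"
    proof (rule ccontr)
      assume "(cv, \<beta>) \<notin> K"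
      from separating_hyperplane_closed_point[OF Kcv Kcl this]
      obtain a b where ab: "a \<bullet> (cv, \<beta>) < b" "\<forall>x\<in>K. a \<bullet> x > b" by blast
      have "0 \<in> K" unfolding K_def by (rule convex_cone_hull_contains_0)
      then have b0: "b < 0" using ab by auto
      have aK: "a \<bullet> g \<ge> 0" if g: "g \<in> K" for g
      proof (rule ccontr)
        assume "\<not> a \<bullet> g \<ge> 0"
        then have neg: "a \<bullet> g < 0" by simp
        define c where "c = b / (a \<bullet> g)"
        have "c \<ge> 0" using neg b0 unfolding c_def by (simp add: divide_nonpos_neg)
        then have "c *\<^sub>R g \<in> K" using Kcc g by (intro convex_cone_scaleR)
        then have "a \<bullet> (c *\<^sub>R g) > b" using ab by blast
        moreover have "a \<bullet> (c *\<^sub>R g) = b" using neg unfolding c_def by simp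
        ultimately show False by simp
      qed
      obtain v t where a_eq: "a = (v, t)" by (cases a)
      have "(0, 1) \<in> G" unfolding G_def by (rule insertI1)
      then have "(0, 1) \<in> K" using GK by (rule subsetD[rotated])
      from aK[OF this] have "t \<ge> 0" unfolding a_eq by simp
      have gen_ineq: "\<And>\<sigma>. \<sigma> \<in> S \<Longrightarrow>
          (\<Sum>n\<in>SV. (W *v v) \<bullet> (alpha n *\<^sub>R \<sigma> n)) + t * ((\<Sum>n\<in>SV. (alpha n *\<^sub>R \<sigma> n) \<bullet> (W *v xi n)) + gamma) \<ge> 0"
      proof -
        fix \<sigma> assume "\<sigma> \<in> S"
        then have "gen \<sigma> \<in> G" unfolding G_def by (intro insertI2 imageI)
        then have "gen \<sigma> \<in> K" using GK by (rule subsetD[rotated])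
        from aK[OF this] show "?thesis \<sigma>" unfolding a_eq gen_def by (simp add: sumW)
      qed
      have ap: "v \<bullet> cv + t * \<beta> < 0" using ab(1) b0 a_eq by simp
      show False
      proof (cases "t > 0")
        case True
        define x where "x = (- (1/t)) *\<^sub>R v"
        have vx: "v = (- t) *\<^sub>R x" unfolding x_def using True by simp
        define \<sigma> where "\<sigma> n = (if n \<in> SV then (\<chi> i. if (W *v (x - xi n)) $ i \<ge> 0 then (1::real) else -1) else undefined)" for n
        have "\<sigma> \<in> S" unfolding S_def \<sigma>_def signs_def by (auto simp: PiE_iff extensional_def)
        from gen_ineq[OF this] have gi:
          "(\<Sum>n\<in>SV. (W *v v) \<bullet> (alpha n *\<^sub>R \<sigma> n)) + t * ((\<Sum>n\<in>SV. (alpha n *\<^sub>R \<sigma> n) \<bullet> (W *v xi n)) + gamma) \<ge> 0" .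
        have A: "(\<Sum>n\<in>SV. (W *v v) \<bullet> (alpha n *\<^sub>R \<sigma> n)) = - t * (\<Sum>n\<in>SV. (W *v x) \<bullet> (alpha n *\<^sub>R \<sigma> n))"
          unfolding vx sum_distrib_left by (rule sum.cong) (simp_all add: matrix_vector_mult_scaleR mv_neg)
        have B: "(\<Sum>n\<in>SV. (alpha n *\<^sub>R \<sigma> n) \<bullet> (W *v (x - xi n))) =
            (\<Sum>n\<in>SV. (W *v x) \<bullet> (alpha n *\<^sub>R \<sigma> n)) - (\<Sum>n\<in>SV. (alpha n *\<^sub>R \<sigma> n) \<bullet> (W *v xi n))"
          unfolding sum_subtractf[symmetric]
          by (rule sum.cong) (simp_all add: matrix_vector_mult_diff_distrib inner_diff_right inner_commute)
        define S1 where "S1 = (\<Sum>n\<in>SV. (W *v x) \<bullet> (alpha n *\<^sub>R \<sigma> n))"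
        define S2 where "S2 = (\<Sum>n\<in>SV. (alpha n *\<^sub>R \<sigma> n) \<bullet> (W *v xi n))"
        have "0 \<le> - t * S1 + t * (S2 + gamma)" using gi A unfolding S1_def S2_def by simp
        also have "- t * S1 + t * (S2 + gamma) = t * (gamma - (S1 - S2))" by (simp add: algebra_simps)
        finally have "0 \<le> t * (gamma - (S1 - S2))" .
        then have "S1 - S2 \<le> gamma" using True by (simp add: zero_le_mult_iff)
        then have "(\<Sum>n\<in>SV. (alpha n *\<^sub>R \<sigma> n) \<bullet> (W *v (x - xi n))) \<le> gamma"
          unfolding B S1_def S2_def .
        moreover have "(\<Sum>n\<in>SV. (alpha n *\<^sub>R \<sigma> n) \<bullet> (W *v (x - xi n))) =
            (\<Sum>n\<in>SV. alpha n * (\<Sum>i\<in>UNIV. (\<chi> i. \<bar>(W *v (x - xi n)) $ i\<bar>) $ i))"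
          by (rule sum.cong) (simp_all add: \<sigma>_def sign_l1 l1norm_def)
        ultimately have "x \<in> U_set xi alpha SV W gamma"
          unfolding U_set_def
          by (intro CollectI exI[where x="\<lambda>n. \<chi> i. \<bar>(W *v (x - xi n)) $ i\<bar>"]) auto
        then have "x \<bullet> cv \<le> \<beta>" using rob Hx by auto
        then have "t * (x \<bullet> cv) \<le> t * \<beta>" using True by simp
        moreover have "v \<bullet> cv = - t * (x \<bullet> cv)" unfolding vx by simp
        ultimately show False using ap by simp
      next
        case False
        then have t0: "t = 0" using \<open>t \<ge> 0\<close> by simp
        define z where "z = - (W *v v)"
        define \<sigma> where "\<sigma> n = (if n \<in> SV then (\<chi> i. if z $ i \<ge> 0 then (1::real) else -1) else undefined)" for n
        have "\<sigma> \<in> S" unfolding S_def \<sigma>_def signs_def by (auto simp: PiE_iff extensional_def)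
        from gen_ineq[OF this] have "(\<Sum>n\<in>SV. (W *v v) \<bullet> (alpha n *\<^sub>R \<sigma> n)) \<ge> 0" using t0 by simp
        moreover have "(\<Sum>n\<in>SV. (W *v v) \<bullet> (alpha n *\<^sub>R \<sigma> n)) = - (\<Sum>n\<in>SV. alpha n * l1norm z)"
          unfolding sum_negf[symmetric]
        proof (rule sum.cong)
          fix n assume "n \<in> SV"
          have "(W *v v) \<bullet> (\<chi> i. if z $ i \<ge> 0 then 1 else -1) = - l1norm z"
            using sign_l1[of z] unfolding z_def by (simp add: inner_commute)
          then show "(W *v v) \<bullet> (alpha n *\<^sub>R \<sigma> n) = - (alpha n * l1norm z)"
            using \<open>n \<in> SV\<close> by (simp add: \<sigma>_def)
        qed simp
        ultimately have le0: "(\<Sum>n\<in>SV. alpha n * l1norm z) \<le> 0" by simp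
        have "alpha k * l1norm z \<le> (\<Sum>n\<in>SV. alpha n * l1norm z)"
          using finSV kSV aSV l1norm_nonneg
          by (intro member_le_sum) (auto intro: mult_nonneg_nonneg less_imp_le)
        then have "alpha k * l1norm z \<le> 0" using le0 by simp
        then have "l1norm z = 0" using aSV[OF kSV] l1norm_nonneg[of z]
          by (simp add: mult_le_0_iff)
        then have "z = 0" by (rule l1norm_zero)
        then have "W *v v = 0" unfolding z_def by simp
        then have "v = 0" using W_pd[of v] by auto
        then show False using ap t0 by simp
      qed
    qed
    then have "(cv, \<beta>) \<in> D" using KD by blast
    then obtain \<pi> lam s where P: "\<pi> \<ge> 0" "s \<ge> 0" "\<forall>n\<in>SV. \<forall>i. \<bar>lam n $ i\<bar> \<le> \<pi> * alpha n"
        "cv = (\<Sum>n\<in>SV. W *v lam n)" "\<beta> = (\<Sum>n\<in>SV. lam n \<bullet> (W *v xi n)) + \<pi> * gamma + s"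
      unfolding D_def mem_Collect_eq by blast
    define \<mu> where "\<mu> n = (1/2) *\<^sub>R ((\<chi> i. \<pi> * alpha n) + lam n)" for n
    define \<rho> where "\<rho> n = (1/2) *\<^sub>R ((\<chi> i. \<pi> * alpha n) - lam n)" for n
    have mr: "\<mu> n - \<rho> n = lam n" for n unfolding \<mu>_def \<rho>_def by (simp add: vec_eq_iff field_simps)
    have rm: "\<rho> n - \<mu> n = - lam n" for n unfolding \<mu>_def \<rho>_def by (simp add: vec_eq_iff field_simps)
    show "\<exists>\<pi>::real. \<exists>\<mu> \<rho> :: nat \<Rightarrow> real^'d.
            \<pi> \<ge> 0 \<and>
            (\<forall>n\<in>SV. \<forall>i. \<mu> n $ i \<ge> 0 \<and> \<rho> n $ i \<ge> 0) \<and>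
            (\<Sum>n\<in>SV. (\<mu> n - \<rho> n) \<bullet> (W *v xi n)) + \<pi> * gamma \<le> \<beta> \<and>
            (\<Sum>n\<in>SV. W *v (\<rho> n - \<mu> n)) + transpose H *v y = 0 \<and>
            (\<forall>n\<in>SV. \<rho> n + \<mu> n = (\<chi> i. \<pi> * alpha n))"
    proof (rule exI[where x=\<pi>], rule exI[where x=\<mu>], rule exI[where x=\<rho>], intro conjI ballI allI)
      show "\<pi> \<ge> 0" by (rule P(1))
    next
      fix n i assume "n \<in> SV"
      then have "\<bar>lam n $ i\<bar> \<le> \<pi> * alpha n" using P(3) by auto
      then show "\<mu> n $ i \<ge> 0" "\<rho> n $ i \<ge> 0" unfolding \<mu>_def \<rho>_def by (auto simp: abs_le_iff)
    next
      show "(\<Sum>n\<in>SV. (\<mu> n - \<rho> n) \<bullet> (W *v xi n)) + \<pi> * gamma \<le> \<beta>"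
        using P(2,5) by (simp add: mr)
    next
      show "(\<Sum>n\<in>SV. W *v (\<rho> n - \<mu> n)) + transpose H *v y = 0"
      proof -
        have "(\<Sum>n\<in>SV. W *v (\<rho> n - \<mu> n)) = - (\<Sum>n\<in>SV. W *v lam n)"
          unfolding sum_negf[symmetric] by (rule sum.cong) (simp_all add: rm mv_neg)
        then show ?thesis using P(4) unfolding cv_def by simp
      qed
    next
      fix n show "\<rho> n + \<mu> n = (\<chi> i. \<pi> * alpha n)"
        unfolding \<mu>_def \<rho>_def by (simp add: vec_eq_iff field_simps)
    qed
  next
    assume "\<exists>\<pi>::real. \<exists>\<mu> \<rho> :: nat \<Rightarrow> real^'d.
            \<pi> \<ge> 0 \<and>
            (\<forall>n\<in>SV. \<forall>i. \<mu> n $ i \<ge> 0 \<and> \<rho> n $ i \<ge> 0) \<and>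
            (\<Sum>n\<in>SV. (\<mu> n - \<rho> n) \<bullet> (W *v xi n)) + \<pi> * gamma \<le> \<beta> \<and>
            (\<Sum>n\<in>SV. W *v (\<rho> n - \<mu> n)) + transpose H *v y = 0 \<and>
            (\<forall>n\<in>SV. \<rho> n + \<mu> n = (\<chi> i. \<pi> * alpha n))"
    then obtain \<pi> \<mu> \<rho> where Q: "\<pi> \<ge> 0" "\<forall>n\<in>SV. \<forall>i. \<mu> n $ i \<ge> 0 \<and> \<rho> n $ i \<ge> 0"
        "(\<Sum>n\<in>SV. (\<mu> n - \<rho> n) \<bullet> (W *v xi n)) + \<pi> * gamma \<le> \<beta>"
        "(\<Sum>n\<in>SV. W *v (\<rho> n - \<mu> n)) + transpose H *v y = 0"
        "\<forall>n\<in>SV. \<rho> n + \<mu> n = (\<chi> i. \<pi> * alpha n)" by blast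
    show "\<forall>x\<in>U_set xi alpha SV W gamma. (H *v x) \<bullet> y \<le> \<beta>"
    proof
      fix x assume "x \<in> U_set xi alpha SV W gamma"
      then obtain ups where U1: "(\<Sum>n\<in>SV. alpha n * (\<Sum>i\<in>UNIV. ups n $ i)) \<le> gamma"
        and U2: "\<forall>n\<in>SV. \<forall>i. - (ups n $ i) \<le> (W *v (x - xi n)) $ i \<and> (W *v (x - xi n)) $ i \<le> ups n $ i"
        unfolding U_set_def by blast
      define d where "d n = \<mu> n - \<rho> n" for n
      have cvd: "cv = (\<Sum>n\<in>SV. W *v d n)"
      proof -
        have "(\<Sum>n\<in>SV. W *v (\<rho> n - \<mu> n)) = - (\<Sum>n\<in>SV. W *v d n)"
          unfolding d_def sum_negf[symmetric] by (rule sum.cong) (simp_all add: matrix_vector_mult_diff_distrib)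
        then show ?thesis using Q(4) unfolding cv_def by (simp add: add_eq_0_iff)
      qed
      have per: "(W *v (x - xi n)) \<bullet> d n \<le> \<pi> * alpha n * (\<Sum>i\<in>UNIV. ups n $ i)" if n: "n \<in> SV" for n
      proof -
        have "(W *v (x - xi n)) \<bullet> d n = (\<Sum>i\<in>UNIV. (W *v (x - xi n)) $ i * (\<mu> n $ i - \<rho> n $ i))"
          unfolding inner_vec_def d_def by simp
        also have "\<dots> \<le> (\<Sum>i\<in>UNIV. ups n $ i * (\<pi> * alpha n))"
        proof (rule sum_mono)
          fix i
          have z: "- (ups n $ i) \<le> (W *v (x - xi n)) $ i" "(W *v (x - xi n)) $ i \<le> ups n $ i"
            using U2 n by auto
          have m: "\<mu> n $ i \<ge> 0" "\<rho> n $ i \<ge> 0" using Q(2) n by auto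
          have s: "\<rho> n $ i + \<mu> n $ i = \<pi> * alpha n" using Q(5) n by (metis vector_add_component vec_lambda_beta)
          have "(W *v (x - xi n)) $ i * \<mu> n $ i \<le> ups n $ i * \<mu> n $ i" using z(2) m(1) by (rule mult_right_mono)
          moreover have "- (ups n $ i) * \<rho> n $ i \<le> (W *v (x - xi n)) $ i * \<rho> n $ i" using z(1) m(2) by (rule mult_right_mono)
          ultimately show "(W *v (x - xi n)) $ i * (\<mu> n $ i - \<rho> n $ i) \<le> ups n $ i * (\<pi> * alpha n)"
            unfolding s[symmetric] by (simp add: algebra_simps)
        qed
        also have "\<dots> = \<pi> * alpha n * (\<Sum>i\<in>UNIV. ups n $ i)"
          by (simp add: sum_distrib_left sum_distrib_right mult.commute)
        finally show ?thesis .
      qed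
      have e: "(\<Sum>n\<in>SV. \<pi> * alpha n * (\<Sum>i\<in>UNIV. ups n $ i)) = \<pi> * (\<Sum>n\<in>SV. alpha n * (\<Sum>i\<in>UNIV. ups n $ i))"
        by (simp add: sum_distrib_left mult.assoc)
      have bnd: "(\<Sum>n\<in>SV. \<pi> * alpha n * (\<Sum>i\<in>UNIV. ups n $ i)) \<le> \<pi> * gamma"
        unfolding e by (rule mult_left_mono[OF U1 Q(1)])
      have "(H *v x) \<bullet> y = x \<bullet> cv" by (rule Hx)
      also have "\<dots> = (\<Sum>n\<in>SV. (W *v x) \<bullet> d n)" unfolding cvd by (rule sumW)
      also have "\<dots> = (\<Sum>n\<in>SV. (W *v (x - xi n)) \<bullet> d n) + (\<Sum>n\<in>SV. d n \<bullet> (W *v xi n))"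
        unfolding sum.distrib[symmetric]
        by (rule sum.cong) (simp_all add: matrix_vector_mult_diff_distrib inner_diff_left inner_diff_right inner_commute)
      also have "\<dots> \<le> (\<Sum>n\<in>SV. \<pi> * alpha n * (\<Sum>i\<in>UNIV. ups n $ i)) + (\<Sum>n\<in>SV. d n \<bullet> (W *v xi n))"
        using per by (intro add_right_mono sum_mono) auto
      also have "\<dots> \<le> \<beta>"
        using bnd Q(3) unfolding d_def by linarith
      finally show "(H *v x) \<bullet> y \<le> \<beta>" .
    qed
  qed
qed

end
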